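(* Let $f_{N_2G}(x)=\left(\frac{\sqrt x+1}{2}\right)\sqrt{\frac{x+1}{2}}-\sqrt x$ for $x\in(0,\infty)$, let $f_{N_2G}^*(u)=u\,f_{N_2G}\!\left(\frac{1-u}{u}\right)$ for $u\in(0,1)$, extended by continuity to $[0,1]$ (explicitly $f_{N_2G}^*(u)=\frac{\sqrt2}{4}\left(\sqrt u+\sqrt{1-u}\right)-\sqrt{u(1-u)}$), and define $\overline M_{N_2G}(C_1,C_2)=E_X\{f_{N_2G}^*(P(C_2\mid x))\}$. Then $$P_e\le \frac12\left[1-\frac{4}{\sqrt2}\,\overline M_{N_2G}(C_1,C_2)\right].$$
   Context: Two-class decision problem: classes $C_1,C_2$, an observation $x$ in a space $\mathrm X$ with density $p(x)$, and a posteriori probabilities $P(C_1\mid x),P(C_2\mid x)\ge0$ with $P(C_1\mid x)+P(C_2\mid x)=1$. $E_X\{g(x)\}=\int_{\mathrm X} g(x)p(x)\,dx$. $P_e=E_X\{\min(P(C_1\mid x),P(C_2\mid x))\}$ is the Bayesian probability of error. *)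

theory Defs
  imports "HOL-Analysis.Analysis"
begin

definition E_X :: "'a measure \<Rightarrow> ('a \<Rightarrow> real) \<Rightarrow> ('a \<Rightarrow> real) \<Rightarrow> real" where
  "E_X M p g = (\<integral>x. g x * p x \<partial>M)"

definition Pe :: "'a measure \<Rightarrow> ('a \<Rightarrow> real) \<Rightarrow> ('a \<Rightarrow> real) \<Rightarrow> ('a \<Rightarrow> real) \<Rightarrow> real" where
  "Pe M p P1 P2 = E_X M p (\<lambda>x. min (P1 x) (P2 x))"

definition fN2G :: "real \<Rightarrow> real" where
  "fN2G x = ((sqrt x + 1) / 2) * sqrt ((x + 1) / 2) - sqrt x"

definition fN2G_star :: "real \<Rightarrow> real" where
  "fN2G_star u =
     (if 0 < u \<and> u < 1 then u * fN2G ((1 - u) / u)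
      else if u = 0 then Lim (at_right 0) (\<lambda>v. v * fN2G ((1 - v) / v))
      else if u = 1 then Lim (at_left 1) (\<lambda>v. v * fN2G ((1 - v) / v))
      else 0)"

definition M_N2G :: "'a measure \<Rightarrow> ('a \<Rightarrow> real) \<Rightarrow> ('a \<Rightarrow> real) \<Rightarrow> real" where
  "M_N2G M p P2 = E_X M p (\<lambda>x. fN2G_star (P2 x))"

end

theory Submission
  imports Defs
begin

definition hh :: "real \<Rightarrow> real" where
  "hh u = sqrt 2 / 4 * (sqrt u + sqrt (1 - u)) - sqrt u * sqrt (1 - u)"

lemma hh_cont: "continuous_on UNIV hh"
  unfolding hh_def by (intro continuous_intros)

lemma inner_eq:
  assumes "0 < u" "u < 1"
  shows "u * fN2G ((1 - u) / u) = hh u"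
proof -
  have su: "sqrt u > 0" using assms by simp
  have s1: "sqrt ((1 - u) / u) = sqrt (1 - u) / sqrt u" by (simp add: real_sqrt_divide)
  have s2: "((1 - u) / u + 1) / 2 = 1 / (2 * u)" using assms by (simp add: field_simps)
  have s3: "sqrt (1 / (2 * u)) = 1 / (sqrt 2 * sqrt u)" by (simp add: real_sqrt_divide real_sqrt_mult)
  have gen: "\<And>q c r::real. q > 0 \<Longrightarrow> r > 0 \<Longrightarrow>
     (q*q) * ((c / q + 1) / 2 * (1 / (r * q)) - c / q) = (c + q) / (2 * r) - q * c"
    by (simp add: field_simps)
  have uu: "u = sqrt u * sqrt u" using assms by simp
  have "u * fN2G ((1 - u) / u) = u * ((sqrt (1 - u) / sqrt u + 1) / 2 * (1 / (sqrt 2 * sqrt u)) - sqrt (1 - u) / sqrt u)"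
    unfolding fN2G_def s1 s2 s3 ..
  also have "\<dots> = (sqrt (1 - u) + sqrt u) / (2 * sqrt 2) - sqrt u * sqrt (1 - u)"
    using gen[OF su, of "sqrt 2" "sqrt (1-u)"] uu by simp
  also have "\<dots> = hh u"
  proof -
    have "1 / (2 * sqrt 2) = sqrt 2 / 4"
      by (simp add: field_simps)
    then have "(sqrt (1 - u) + sqrt u) / (2 * sqrt 2) = sqrt 2 / 4 * (sqrt u + sqrt (1 - u))"
      by (metis add.commute divide_inverse mult.commute inverse_eq_divide)
    thus ?thesis unfolding hh_def by simp
  qed
  finally show ?thesis .
qed

lemma star_eq:
  assumes "0 \<le> u" "u \<le> 1"
  shows "fN2G_star u = hh u"
proof -
  have ev: "\<forall>\<^sub>F v in F. v * fN2G ((1 - v) / v) = hh v"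
    if "\<forall>\<^sub>F v in F. 0 < v \<and> v < 1" for F
    using that by (rule eventually_mono) (auto intro: inner_eq)
  have c: "\<And>a F. F \<le> at a \<Longrightarrow> (hh \<longlongrightarrow> hh a) F"
    using hh_cont by (metis UNIV_I continuous_on_def at_within_open open_UNIV tendsto_mono)
  show ?thesis
  proof (cases "0 < u \<and> u < 1")
    case True thus ?thesis by (simp add: fN2G_star_def inner_eq)
  next
    case False
    then have "u = 0 \<or> u = 1" using assms by auto
    thus ?thesis
    proof
      assume u0: "u = 0"
      have e: "\<forall>\<^sub>F v in at_right 0. 0 < v \<and> (v::real) < 1"
        using eventually_at_right_real[of 0 1] by simp
      have "((\<lambda>v. v * fN2G ((1 - v) / v)) \<longlongrightarrow> hh 0) (at_right 0)"
      proof -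
        have le: "at_right 0 \<le> at (0::real)" by (rule at_le) simp
        show ?thesis using c[OF le] tendsto_cong[OF ev[OF e]] by simp
      qed
      thus ?thesis using u0 by (simp add: fN2G_star_def tendsto_Lim)
    next
      assume u1: "u = 1"
      have e: "\<forall>\<^sub>F v in at_left 1. 0 < v \<and> (v::real) < 1"
        using eventually_at_left_real[of 0 1] by simp
      have "((\<lambda>v. v * fN2G ((1 - v) / v)) \<longlongrightarrow> hh 1) (at_left 1)"
      proof -
        have le: "at_left 1 \<le> at (1::real)" by (rule at_le) simp
        show ?thesis using c[OF le] tendsto_cong[OF ev[OF e]] by simp
      qed
      thus ?thesis using u1 by (simp add: fN2G_star_def tendsto_Lim)
    qed
  qed
qed

lemma key_ab:
  fixes a b r :: real
  assumes "0 \<le> a" "a \<le> b" "a^2 + b^2 = 1" "r = sqrt 2"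
  shows "b^2 - a^2 - (a + b) + 2 * r * a * b \<ge> 0"
proof -
  define s where "s = a + b"
  define d where "d = b - a"
  have r2: "r^2 = 2" "r > 0" using assms by auto
  have ab0: "a * b \<ge> 0" using assms by simp
  have ss: "s^2 = 1 + 2 * (a * b)" using assms(3) unfolding s_def by (simp add: power2_eq_square algebra_simps)
  have sd: "s^2 + d^2 = 2" using assms unfolding s_def d_def by (simp add: power2_eq_square algebra_simps)
  have s0: "s \<ge> 0" using assms s_def by simp
  have s1: "s \<ge> 1"
  proof (rule ccontr)
    assume "\<not> s \<ge> 1"
    hence "s * s < 1 * 1" using s0 by (intro mult_strict_mono) auto
    thus False using ss ab0 by (simp add: power2_eq_square)
  qed
  have d00: "d \<ge> 0" using assms d_def by simp
  have "d^2 \<le> 1^2"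
  proof -
    have "1 \<le> s * s" using s1 mult_mono[of 1 s 1 s] by simp
    thus ?thesis using sd by (simp add: power2_eq_square)
  qed
  hence d1: "d \<le> 1" by (rule power2_le_imp_le) simp
  have "s^2 \<le> r^2" using sd r2 zero_le_power2[of d] by linarith
  hence sr: "s \<le> r" by (rule power2_le_imp_le) (use r2 in simp)
  have ab: "2 * a * b = 1 - d^2" using assms unfolding d_def by (simp add: power2_eq_square algebra_simps)
  have bb: "b^2 - a^2 = d * s" unfolding d_def s_def by (simp add: power2_eq_square algebra_simps)
  have rr: "2 * r * a * b = r * (2 * a * b)" by simp
  have eq: "b^2 - a^2 - (a + b) + 2 * r * a * b = (1 - d) * (r * (1 + d) - s)"
    unfolding rr ab bb s_def[symmetric] by (simp add: power2_eq_square algebra_simps)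
  have "r * d \<ge> 0" using r2 d00 by simp
  hence "r * (1 + d) - s \<ge> 0" using sr by (simp add: algebra_simps)
  moreover have "1 - d \<ge> 0" using d1 by simp
  ultimately show ?thesis using eq by simp
qed

lemma lin2: "(0::real) \<le> A - B - (b + a) + P \<Longrightarrow> P = Q \<Longrightarrow> A = u \<Longrightarrow> B = 1 - u \<Longrightarrow>
   2 * (1 - u) \<le> A + B - (a + b) + Q" by simp

lemma half_le: "(2::real) * u \<le> X \<Longrightarrow> u \<le> 1/2 * X" by simp

lemma key:
  assumes "0 \<le> u" "u \<le> 1"
  shows "min (1 - u) u \<le> 1/2 * (1 - 4 / sqrt 2 * hh u)"
proof -
  define a where "a = sqrt u"
  define b where "b = sqrt (1 - u)"
  have a2: "a^2 = u" "b^2 = 1 - u" "a \<ge> 0" "b \<ge> 0" using assms a_def b_def by auto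
  have r: "4 / sqrt 2 = 2 * sqrt 2" by (simp add: field_simps)
  have rhs: "1/2 * (1 - 4 / sqrt 2 * hh u) = 1/2 * (a^2 + b^2 - (a + b) + 2 * sqrt 2 * a * b)"
    unfolding r hh_def a_def[symmetric] b_def[symmetric] using a2
    by (simp add: algebra_simps)
  show ?thesis
  proof (cases "a \<le> b")
    case True
    have "b^2 - a^2 - (a + b) + 2 * sqrt 2 * a * b \<ge> 0"
      using key_ab[of a b "sqrt 2"] True a2 by simp
    hence "a^2 + b^2 - (a + b) + 2 * sqrt 2 * a * b \<ge> 2 * u" using a2 by linarith
    hence "u \<le> 1/2 * (1 - 4 / sqrt 2 * hh u)" unfolding rhs by (rule half_le)
    thus ?thesis by (rule min.coboundedI2)
  next
    case False
    have k: "a^2 - b^2 - (b + a) + 2 * sqrt 2 * b * a \<ge> 0"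
      using key_ab[of b a "sqrt 2"] False a2 by simp
    have m: "2 * sqrt 2 * b * a = 2 * sqrt 2 * a * b" by simp
    have "a^2 + b^2 - (a + b) + 2 * sqrt 2 * a * b \<ge> 2 * (1 - u)"
      by (rule lin2[OF k m a2(1) a2(2)])
    hence "1 - u \<le> 1/2 * (1 - 4 / sqrt 2 * hh u)" unfolding rhs by (rule half_le)
    thus ?thesis by (rule min.coboundedI1)
  qed
qed

theorem mainTheorem11:
  fixes M :: "'a measure" and p P1 P2 :: "'a \<Rightarrow> real"
  assumes p_meas: "p \<in> borel_measurable M"
    and p_nonneg: "\<And>x. x \<in> space M \<Longrightarrow> p x \<ge> 0"
    and p_int: "integrable M p"
    and p_one: "(\<integral>x. p x \<partial>M) = 1"
    and P1_meas: "P1 \<in> borel_measurable M"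
    and P2_meas: "P2 \<in> borel_measurable M"
    and P1_nonneg: "\<And>x. x \<in> space M \<Longrightarrow> P1 x \<ge> 0"
    and P2_nonneg: "\<And>x. x \<in> space M \<Longrightarrow> P2 x \<ge> 0"
    and P_sum: "\<And>x. x \<in> space M \<Longrightarrow> P1 x + P2 x = 1"
  shows "Pe M p P1 P2 \<le> 1/2 * (1 - 4 / sqrt 2 * M_N2G M p P2)"
proof -
  have P2le: "\<And>x. x \<in> space M \<Longrightarrow> P2 x \<le> 1" using P_sum P1_nonneg by force
  have hm: "(\<lambda>x. hh (P2 x)) \<in> borel_measurable M"
    using borel_measurable_continuous_on[OF hh_cont P2_meas] by simp
  have hb: "\<And>u. 0 \<le> u \<Longrightarrow> u \<le> 1 \<Longrightarrow> \<bar>hh u\<bar> \<le> 2"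
  proof -
    fix u :: real assume u: "0 \<le> u" "u \<le> 1"
    have x: "sqrt u \<le> 1" "sqrt (1 - u) \<le> 1" "sqrt u \<ge> 0" "sqrt (1 - u) \<ge> 0" using u by auto
    have r2: "sqrt 2 \<le> 2" "sqrt 2 \<ge> 0"
      using real_sqrt_le_mono[of 2 4] by (auto simp: real_sqrt_four)
    have p1: "sqrt u * sqrt (1-u) \<le> 1" "sqrt u * sqrt (1-u) \<ge> 0" using x by (auto simp: mult_le_one)
    have p2: "sqrt 2 * (sqrt u + sqrt (1 - u)) \<le> 2 * 2" "sqrt 2 * (sqrt u + sqrt (1 - u)) \<ge> 0"
    proof -
      have xx: "sqrt u + sqrt (1 - u) \<le> 2" "sqrt u + sqrt (1 - u) \<ge> 0" using x by linarith+
      show "sqrt 2 * (sqrt u + sqrt (1 - u)) \<le> 2 * 2" using mult_mono[OF r2(1) xx(1) _ xx(2)] by simp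
      show "sqrt 2 * (sqrt u + sqrt (1 - u)) \<ge> 0" using r2 xx by simp
    qed
    show "\<bar>hh u\<bar> \<le> 2" unfolding hh_def using p1 p2 by simp
  qed
  have int_h: "integrable M (\<lambda>x. hh (P2 x) * p x)"
  proof -
    have i2: "integrable M (\<lambda>x. 2 * p x)" using p_int by simp
    show ?thesis
  proof (rule Bochner_Integration.integrable_bound[OF i2])
    show "(\<lambda>x. hh (P2 x) * p x) \<in> borel_measurable M" using hm p_meas by simp
    show "AE x in M. norm (hh (P2 x) * p x) \<le> norm (2 * p x)"
    proof (rule AE_I2)
      fix x assume x: "x \<in> space M"
      show "norm (hh (P2 x) * p x) \<le> norm (2 * p x)"
        using hb[of "P2 x"] P2_nonneg[OF x] P2le[OF x] p_nonneg[OF x]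
        by (simp add: abs_mult mult_right_mono)
    qed
  qed
  qed
  have int_m: "integrable M (\<lambda>x. min (P1 x) (P2 x) * p x)"
  proof (rule Bochner_Integration.integrable_bound[OF p_int])
    show "(\<lambda>x. min (P1 x) (P2 x) * p x) \<in> borel_measurable M" using P1_meas P2_meas p_meas by simp
    show "AE x in M. norm (min (P1 x) (P2 x) * p x) \<le> norm (p x)"
    proof (rule AE_I2)
      fix x assume x: "x \<in> space M"
      show "norm (min (P1 x) (P2 x) * p x) \<le> norm (p x)"
        using P1_nonneg[OF x] P2le[OF x] P2_nonneg[OF x] p_nonneg[OF x]
        by (simp add: abs_mult mult_left_le_one_le)
    qed
  qed
  have MM: "M_N2G M p P2 = (\<integral>x. hh (P2 x) * p x \<partial>M)"
    unfolding M_N2G_def E_X_def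
    by (rule Bochner_Integration.integral_cong[OF refl]) (auto simp: star_eq P2_nonneg P2le)
  have "Pe M p P1 P2 = (\<integral>x. min (P1 x) (P2 x) * p x \<partial>M)"
    unfolding Pe_def E_X_def ..
  also have "\<dots> \<le> (\<integral>x. 1/2 * p x - (sqrt 2) * (hh (P2 x) * p x) \<partial>M)"
  proof (rule integral_mono[OF int_m])
    show "integrable M (\<lambda>x. 1/2 * p x - sqrt 2 * (hh (P2 x) * p x))"
      using p_int int_h by simp
    fix x assume x: "x \<in> space M"
    have k: "min (P1 x) (P2 x) \<le> 1/2 * (1 - 4 / sqrt 2 * hh (P2 x))"
    proof -
      have "P1 x = 1 - P2 x" using P_sum[OF x] by simp
      thus ?thesis using key[of "P2 x"] P2_nonneg[OF x] P2le[OF x] by simp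
    qed
    have r: "4 / sqrt 2 = 2 * sqrt 2" by (simp add: field_simps)
    have "min (P1 x) (P2 x) * p x \<le> (1/2 * (1 - 4 / sqrt 2 * hh (P2 x))) * p x"
      using k p_nonneg[OF x] by (rule mult_right_mono)
    thus "min (P1 x) (P2 x) * p x \<le> 1/2 * p x - sqrt 2 * (hh (P2 x) * p x)"
      unfolding r by (simp add: algebra_simps)
  qed
  also have "\<dots> = 1/2 - sqrt 2 * M_N2G M p P2"
    using p_int int_h p_one MM by simp
  also have "\<dots> = 1/2 * (1 - 4 / sqrt 2 * M_N2G M p P2)"
  proof -
    have r: "4 / sqrt 2 = 2 * sqrt 2" by (simp add: field_simps)
    show ?thesis unfolding r by (simp add: algebra_simps)
  qed
  finally show ?thesis .
qed

end
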